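(* Let $G$ be a finite simple graph that contains neither $3K_1$ (three pairwise non-adjacent vertices) nor $K_1\cup K_5$ (the disjoint union of a single vertex and a complete graph on $5$ vertices) as an induced subgraph. Then $$\chi(G)\leq \frac{7}{4}\omega(G).$$
   Context: All graphs are simple, finite and undirected. $\chi(G)$ is the chromatic number of $G$ (the smallest $k$ such that $V(G)$ can be partitioned into $k$ independent sets) and $\omega(G)$ is the clique number of $G$ (the largest number of pairwise adjacent vertices). *)

theory Defs
  imports Complex_Main
begin

definition simple_graph :: "'a set \<Rightarrow> ('a \<Rightarrow> 'a \<Rightarrow> bool) \<Rightarrow> bool" where
  "simple_graph V E \<longleftrightarrow> finite V \<and> (\<forall>x y. E x y \<longrightarrow> E y x)
     \<and> (\<forall>x. \<not> E x x) \<and> (\<forall>x y. E x y \<longrightarrow> x \<in> V \<and> y \<in> V)"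

definition is_clique :: "'a set \<Rightarrow> ('a \<Rightarrow> 'a \<Rightarrow> bool) \<Rightarrow> 'a set \<Rightarrow> bool" where
  "is_clique V E K \<longleftrightarrow> K \<subseteq> V \<and> (\<forall>x\<in>K. \<forall>y\<in>K. x \<noteq> y \<longrightarrow> E x y)"

definition clique_number :: "'a set \<Rightarrow> ('a \<Rightarrow> 'a \<Rightarrow> bool) \<Rightarrow> nat" where
  "clique_number V E = Max (card ` {K. is_clique V E K})"

definition is_colouring :: "'a set \<Rightarrow> ('a \<Rightarrow> 'a \<Rightarrow> bool) \<Rightarrow> nat \<Rightarrow> ('a \<Rightarrow> nat) \<Rightarrow> bool" where
  "is_colouring V E k c \<longleftrightarrow> (\<forall>v\<in>V. c v < k) \<and> (\<forall>x\<in>V. \<forall>y\<in>V. E x y \<longrightarrow> c x \<noteq> c y)"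

definition chromatic_number :: "'a set \<Rightarrow> ('a \<Rightarrow> 'a \<Rightarrow> bool) \<Rightarrow> nat" where
  "chromatic_number V E = (LEAST k. \<exists>c. is_colouring V E k c)"

definition has_induced_3K1 :: "'a set \<Rightarrow> ('a \<Rightarrow> 'a \<Rightarrow> bool) \<Rightarrow> bool" where
  "has_induced_3K1 V E \<longleftrightarrow> (\<exists>a\<in>V. \<exists>b\<in>V. \<exists>c\<in>V. a \<noteq> b \<and> a \<noteq> c \<and> b \<noteq> c
      \<and> \<not> E a b \<and> \<not> E a c \<and> \<not> E b c)"

definition has_induced_K1_K5 :: "'a set \<Rightarrow> ('a \<Rightarrow> 'a \<Rightarrow> bool) \<Rightarrow> bool" where
  "has_induced_K1_K5 V E \<longleftrightarrow> (\<exists>v\<in>V. \<exists>K. is_clique V E K \<and> card K = 5 \<and> v \<notin> K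
      \<and> (\<forall>x\<in>K. \<not> E v x))"

end

theory Submission
  imports Defs
begin


definition ff :: "nat \<Rightarrow> real" where
 "ff d = (if d = 0 then 1 else if d = 1 then 1/2 else if d = 2 then 2/5 else if d = 3 then 17/50 else 127/425)"
definition gg :: "nat \<Rightarrow> real" where "gg d = ff (d - 1) - ff d"

lemma le4_cases: "(d::nat) \<le> 4 \<Longrightarrow> d = 0 \<or> d = 1 \<or> d = 2 \<or> d = 3 \<or> d = 4" by auto

lemma T1: assumes "e \<le> d" "d \<le> 4" shows "ff d - ff (d - e) \<le> - real e * gg d"
proof -
  have "e \<le> 4" using assms by auto
  from le4_cases[OF assms(2)] le4_cases[OF this] assms(1) show ?thesis
    by (auto simp: ff_def gg_def)
qed

lemma T2: assumes "d \<le> 4" shows "(real d + 1) * ff d - 1 = real d * (real d - 1) * gg d"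
  using le4_cases[OF assms] by (auto simp: ff_def gg_def)

lemma T3: assumes "1 \<le> a" "1 \<le> b" "a \<le> 4" "b \<le> 4"
  shows "(real a - real b) * (gg a - gg b) \<le> 0"
  using le4_cases[OF assms(3)] le4_cases[OF assms(4)] assms(1,2) by (auto simp: ff_def gg_def)

lemma T4: "d \<le> 4 \<Longrightarrow> 127/425 \<le> ff d"
  using le4_cases by (auto simp: ff_def)




locale tfg =
  fixes V :: "'a set" and H :: "'a \<Rightarrow> 'a \<Rightarrow> bool"
  assumes finV: "finite V"
    and symH: "H x y \<Longrightarrow> H y x"
    and irrH: "\<not> H x x"
    and inV: "H x y \<Longrightarrow> x \<in> V"
    and tri: "H x y \<Longrightarrow> H y z \<Longrightarrow> H x z \<Longrightarrow> False"
    and deg: "x \<in> V \<Longrightarrow> card {y\<in>V. H x y} \<le> 4"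
begin

definition dg :: "'a set \<Rightarrow> 'a \<Rightarrow> nat" where
  "dg W x = card {y\<in>W. H x y}"

definition Phi :: "'a set \<Rightarrow> real" where
  "Phi W = (\<Sum>x\<in>W. ff (dg W x))"

definition indep :: "'a set \<Rightarrow> 'a set \<Rightarrow> bool" where
  "indep S I \<longleftrightarrow> I \<subseteq> S \<and> (\<forall>x\<in>I. \<forall>y\<in>I. \<not> H x y)"

definition alpha :: "'a set \<Rightarrow> nat" where
  "alpha S = Max (card ` {I. indep S I})"

lemma fin_sub: "S \<subseteq> V \<Longrightarrow> finite S"
  using finV finite_subset by blast

lemma indep_fin: "S \<subseteq> V \<Longrightarrow> finite {I. indep S I}"
proof -
  assume "S \<subseteq> V"
  hence "finite (Pow S)" using fin_sub by auto
  moreover have "{I. indep S I} \<subseteq> Pow S" by (auto simp: indep_def)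
  ultimately show ?thesis using finite_subset by blast
qed

lemma alpha_ge: "S \<subseteq> V \<Longrightarrow> indep S I \<Longrightarrow> card I \<le> alpha S"
  unfolding alpha_def using indep_fin by (auto intro: Max_ge)

lemma alpha_ex: "S \<subseteq> V \<Longrightarrow> \<exists>I. indep S I \<and> card I = alpha S"
proof -
  assume S: "S \<subseteq> V"
  have "indep S {}" by (auto simp: indep_def)
  hence "alpha S \<in> card ` {I. indep S I}" unfolding alpha_def
    using indep_fin[OF S] by (intro Max_in) auto
  thus ?thesis by auto
qed

lemma dg_le4: "W \<subseteq> V \<Longrightarrow> x \<in> W \<Longrightarrow> dg W x \<le> 4"
proof -
  assume a: "W \<subseteq> V" "x \<in> W"
  have "dg W x \<le> card {y\<in>V. H x y}" unfolding dg_def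
    by (rule card_mono) (use finV a in auto)
  thus ?thesis using deg a by force
qed

lemma dg_pos: "W \<subseteq> V \<Longrightarrow> u \<in> W \<Longrightarrow> x \<in> W \<Longrightarrow> H u x \<Longrightarrow> 1 \<le> dg W u"
proof -
  assume a: "W \<subseteq> V" "u \<in> W" "x \<in> W" "H u x"
  have "finite {y\<in>W. H u y}" using fin_sub[OF a(1)] by auto
  moreover have "x \<in> {y\<in>W. H u y}" using a by auto
  ultimately show ?thesis unfolding dg_def
    by (metis One_nat_def Suc_leI card_gt_0_iff empty_iff)
qed

lemma card_as_sum: "finite W \<Longrightarrow> real (card {y\<in>W. P y}) = (\<Sum>y\<in>W. if P y then 1 else 0)"
  using sum.inter_filter[of W "\<lambda>_. 1::real" P] by simp

lemma loss:
  assumes W: "W \<subseteq> V" and v: "v \<in> W"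
  shows "Phi W - Phi (W - insert v {u\<in>W. H v u}) \<le> ff (dg W v)
     + (\<Sum>u\<in>W. if H v u then ff (dg W u) else 0)
     - (\<Sum>u\<in>W. if H v u then (\<Sum>x\<in>W. if H u x \<and> x \<noteq> v then gg (dg W x) else 0) else 0)"
proof -
  define d where "d = dg W"
  define Nv where "Nv = {u\<in>W. H v u}"
  define Wv where "Wv = W - insert v Nv"
  define e where "e x = card {u\<in>W. H x u \<and> H v u}" for x
  have finW: "finite W" using fin_sub[OF W] .
  have NcW: "insert v Nv \<subseteq> W" using v by (auto simp: Nv_def)
  have vNv: "v \<notin> Nv" using irrH by (auto simp: Nv_def)
  have split1: "Phi W = (\<Sum>x\<in>Wv. ff (d x)) + (\<Sum>x\<in>insert v Nv. ff (d x))"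
    unfolding Phi_def Wv_def d_def by (rule sum.subset_diff[OF NcW finW])
  have s2: "(\<Sum>x\<in>insert v Nv. ff (d x)) = ff (d v) + (\<Sum>u\<in>W. if H v u then ff (d u) else 0)"
    using vNv finW by (simp add: Nv_def sum.inter_filter)
  have deq: "d x = dg Wv x + e x" if x: "x \<in> Wv" for x
  proof -
    have xv: "\<not> H x v" using x symH by (auto simp: Wv_def Nv_def)
    have "{y\<in>W. H x y} = {y\<in>Wv. H x y} \<union> {u\<in>W. H x u \<and> H v u}"
      using xv by (auto simp: Wv_def Nv_def)
    moreover have "{y\<in>Wv. H x y} \<inter> {u\<in>W. H x u \<and> H v u} = {}"
      by (auto simp: Wv_def Nv_def)
    ultimately show ?thesis unfolding d_def dg_def e_def
      using finW by (simp add: card_Un_disjoint Wv_def)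
  qed
  have WvW: "Wv \<subseteq> W" by (auto simp: Wv_def)
  have part: "ff (d x) - ff (dg Wv x) \<le> - real (e x) * gg (d x)" if x: "x \<in> Wv" for x
  proof -
    have "d x \<le> 4" unfolding d_def using dg_le4[OF W] x WvW by auto
    moreover have "e x \<le> d x" using deq[OF x] by simp
    ultimately have "ff (d x) - ff (d x - e x) \<le> - real (e x) * gg (d x)" using T1 by blast
    moreover have "d x - e x = dg Wv x" using deq[OF x] by simp
    ultimately show ?thesis by simp
  qed
  have "(\<Sum>x\<in>Wv. ff (d x)) - Phi Wv = (\<Sum>x\<in>Wv. ff (d x) - ff (dg Wv x))"
    unfolding Phi_def by (simp add: sum_subtractf)
  also have "\<dots> \<le> (\<Sum>x\<in>Wv. - real (e x) * gg (d x))"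
    by (rule sum_mono) (use part in auto)
  also have "\<dots> = - (\<Sum>x\<in>Wv. real (e x) * gg (d x))"
    by (simp add: sum_negf)
  finally have s3: "(\<Sum>x\<in>Wv. ff (d x)) - Phi Wv \<le> - (\<Sum>x\<in>Wv. real (e x) * gg (d x))" .
  have finWv: "finite Wv" using finW WvW finite_subset by blast
  have "(\<Sum>x\<in>Wv. real (e x) * gg (d x))
      = (\<Sum>x\<in>Wv. \<Sum>u\<in>W. if H x u \<and> H v u then gg (d x) else 0)"
    unfolding e_def using finW
    by (auto simp: card_as_sum sum_distrib_right intro!: sum.cong)
  also have "\<dots> = (\<Sum>u\<in>W. \<Sum>x\<in>Wv. if H x u \<and> H v u then gg (d x) else 0)"
    by (rule sum.swap)
  also have "\<dots> = (\<Sum>u\<in>W. if H v u then (\<Sum>x\<in>W. if H u x \<and> x \<noteq> v then gg (d x) else 0) else 0)"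
  proof (rule sum.cong[OF refl])
    fix u assume u: "u \<in> W"
    show "(\<Sum>x\<in>Wv. if H x u \<and> H v u then gg (d x) else 0) =
      (if H v u then (\<Sum>x\<in>W. if H u x \<and> x \<noteq> v then gg (d x) else 0) else 0)"
    proof (cases "H v u")
      case False thus ?thesis by simp
    next
      case True
      have "(\<Sum>x\<in>W. if H u x \<and> x \<noteq> v then gg (d x) else 0)
          = (\<Sum>x\<in>Wv. if H u x \<and> x \<noteq> v then gg (d x) else 0)
            + (\<Sum>x\<in>insert v Nv. if H u x \<and> x \<noteq> v then gg (d x) else 0)"
        unfolding Wv_def by (rule sum.subset_diff[OF NcW finW])
      also have "(\<Sum>x\<in>insert v Nv. if H u x \<and> x \<noteq> v then gg (d x) else 0) = 0"
      proof (rule sum.neutral, rule ballI)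
        fix x assume "x \<in> insert v Nv"
        thus "(if H u x \<and> x \<noteq> v then gg (d x) else 0) = 0"
          using True tri by (auto simp: Nv_def)
      qed
      also have "(\<Sum>x\<in>Wv. if H u x \<and> x \<noteq> v then gg (d x) else 0)
          = (\<Sum>x\<in>Wv. if H x u \<and> H v u then gg (d x) else 0)"
        by (rule sum.cong[OF refl]) (use True symH in \<open>auto simp: Wv_def\<close>)
      finally show ?thesis using True by simp
    qed
  qed
  finally have s4: "(\<Sum>x\<in>Wv. real (e x) * gg (d x)) = (\<Sum>u\<in>W. if H v u then (\<Sum>x\<in>W. if H u x \<and> x \<noteq> v then gg (d x) else 0) else 0)" .
  show ?thesis
    using split1 s2 s3 s4 unfolding Wv_def[symmetric] Nv_def[symmetric] d_def[symmetric] by linarith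
qed

lemma total:
  assumes W: "W \<subseteq> V"
  shows "(\<Sum>v\<in>W. ff (dg W v) + (\<Sum>u\<in>W. if H v u then ff (dg W u) else 0)
     - (\<Sum>u\<in>W. if H v u then (\<Sum>x\<in>W. if H u x \<and> x \<noteq> v then gg (dg W x) else 0) else 0))
     \<le> real (card W)"
proof -
  have finW: "finite W" using fin_sub[OF W] .
  define D where "D u = real (dg W u)" for u
  define g where "g u = gg (dg W u)" for u
  define F where "F u = ff (dg W u)" for u
  have Dsum: "D u = (\<Sum>x\<in>W. if H u x then 1 else 0)" for u
    unfolding D_def dg_def using card_as_sum[OF finW] by simp
  have Dsum': "D u = (\<Sum>v\<in>W. if H v u then 1 else 0)" for u
    unfolding Dsum by (rule sum.cong) (auto intro: symH)
  have A: "(\<Sum>v\<in>W. \<Sum>u\<in>W. if H v u then F u else 0) = (\<Sum>u\<in>W. D u * F u)"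
  proof -
    have "(\<Sum>v\<in>W. \<Sum>u\<in>W. if H v u then F u else 0) = (\<Sum>u\<in>W. \<Sum>v\<in>W. if H v u then F u else 0)"
      by (rule sum.swap)
    also have "\<dots> = (\<Sum>u\<in>W. D u * F u)"
      by (rule sum.cong) (auto simp: Dsum' sum_distrib_right intro!: sum.cong)
    finally show ?thesis .
  qed
  have cardm: "(\<Sum>v\<in>W. if H v u \<and> H u x \<and> x \<noteq> v then g x else 0) = (if H u x then (D u - 1) * g x else 0)"
    if x: "x \<in> W" for u x
  proof (cases "H u x")
    case False thus ?thesis by simp
  next
    case True
    have "(\<Sum>v\<in>W. if H v u \<and> H u x \<and> x \<noteq> v then g x else 0) = g x * real (card ({y\<in>W. H u y} - {x}))"
    proof -
      have "{y\<in>W. H u y} - {x} = {v\<in>W. H v u \<and> x \<noteq> v}" using symH by auto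
      hence "real (card ({y\<in>W. H u y} - {x})) = (\<Sum>v\<in>W. if H v u \<and> x \<noteq> v then 1 else 0)"
        using card_as_sum[OF finW] by simp
      thus ?thesis using True by (auto simp: sum_distrib_left intro!: sum.cong)
    qed
    also have "real (card ({y\<in>W. H u y} - {x})) = D u - 1"
    proof -
      have "x \<in> {y\<in>W. H u y}" using x True by auto
      moreover have "finite {y\<in>W. H u y}" using finW by auto
      ultimately have "card ({y\<in>W. H u y} - {x}) = dg W u - 1" unfolding dg_def by simp
      moreover have "dg W u \<ge> 1" unfolding dg_def using \<open>x \<in> {y\<in>W. H u y}\<close> \<open>finite {y\<in>W. H u y}\<close>
        by (metis One_nat_def Suc_leI card_gt_0_iff empty_iff)
      ultimately show ?thesis unfolding D_def by simp
    qed
    finally show ?thesis using True by (simp add: mult.commute)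
  qed
  have B: "(\<Sum>v\<in>W. \<Sum>u\<in>W. if H v u then (\<Sum>x\<in>W. if H u x \<and> x \<noteq> v then g x else 0) else 0)
     = (\<Sum>u\<in>W. \<Sum>x\<in>W. if H u x then (D u - 1) * g x else 0)"
  proof -
    have "(\<Sum>v\<in>W. \<Sum>u\<in>W. if H v u then (\<Sum>x\<in>W. if H u x \<and> x \<noteq> v then g x else 0) else 0)
        = (\<Sum>v\<in>W. \<Sum>u\<in>W. \<Sum>x\<in>W. if H v u \<and> H u x \<and> x \<noteq> v then g x else 0)"
      by (intro sum.cong refl) auto
    also have "\<dots> = (\<Sum>u\<in>W. \<Sum>v\<in>W. \<Sum>x\<in>W. if H v u \<and> H u x \<and> x \<noteq> v then g x else 0)"
      by (rule sum.swap)
    also have "\<dots> = (\<Sum>u\<in>W. \<Sum>x\<in>W. \<Sum>v\<in>W. if H v u \<and> H u x \<and> x \<noteq> v then g x else 0)"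
      by (intro sum.cong refl sum.swap)
    also have "\<dots> = (\<Sum>u\<in>W. \<Sum>x\<in>W. if H u x then (D u - 1) * g x else 0)"
      by (intro sum.cong refl) (rule cardm)
    finally show ?thesis .
  qed
  have C: "(\<Sum>v\<in>W. F v + D v * F v) - real (card W) = (\<Sum>u\<in>W. \<Sum>x\<in>W. if H u x then (D u - 1) * g u else 0)"
  proof -
    have "(\<Sum>v\<in>W. F v + D v * F v) - real (card W) = (\<Sum>v\<in>W. (D v + 1) * F v - 1)"
      by (simp add: sum_subtractf sum.distrib algebra_simps)
    also have "\<dots> = (\<Sum>v\<in>W. D v * (D v - 1) * g v)"
      by (rule sum.cong[OF refl]) (use T2 dg_le4[OF W] in \<open>auto simp: D_def F_def g_def\<close>)
    also have "\<dots> = (\<Sum>u\<in>W. \<Sum>x\<in>W. if H u x then (D u - 1) * g u else 0)"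
    proof (rule sum.cong[OF refl])
      fix u
      show "D u * (D u - 1) * g u = (\<Sum>x\<in>W. if H u x then (D u - 1) * g u else 0)"
      proof -
        have "(\<Sum>x\<in>W. if H u x then (D u - 1) * g u else 0) = ((D u - 1) * g u) * (\<Sum>x\<in>W. if H u x then 1 else 0)"
          by (auto simp: sum_distrib_left intro!: sum.cong)
        thus ?thesis using Dsum[of u] by simp
      qed
    qed
    finally show ?thesis .
  qed
  define Q where "Q = (\<Sum>u\<in>W. \<Sum>x\<in>W. if H u x then (D u - 1) * (g u - g x) else 0)"
  have Qsym: "Q = (\<Sum>u\<in>W. \<Sum>x\<in>W. if H u x then (D x - 1) * (g x - g u) else 0)"
  proof -
    have "Q = (\<Sum>x\<in>W. \<Sum>u\<in>W. if H u x then (D u - 1) * (g u - g x) else 0)"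
      unfolding Q_def by (rule sum.swap)
    also have "\<dots> = (\<Sum>u\<in>W. \<Sum>x\<in>W. if H u x then (D x - 1) * (g x - g u) else 0)"
      by (intro sum.cong refl) (auto intro: symH)
    finally show ?thesis .
  qed
  have "2 * Q = (\<Sum>u\<in>W. \<Sum>x\<in>W. if H u x then (D u - D x) * (g u - g x) else 0)"
    unfolding mult_2 apply (subst (2) Qsym) unfolding Q_def sum.distrib[symmetric]
    by (intro sum.cong refl) (auto simp: algebra_simps)
  also have "\<dots> \<le> 0"
  proof (intro sum_nonpos ballI)
    fix u x assume u: "u \<in> W" and x: "x \<in> W"
    show "(if H u x then (D u - D x) * (g u - g x) else 0) \<le> 0"
    proof (cases "H u x")
      case True
      have "1 \<le> dg W u" using dg_pos[OF W u x True] .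
      moreover have "1 \<le> dg W x" using dg_pos[OF W x u symH[OF True]] .
      ultimately show ?thesis using True T3 dg_le4[OF W u] dg_le4[OF W x]
        unfolding D_def g_def by auto
    qed simp
  qed
  finally have Qle: "Q \<le> 0" by simp
  have Qeq: "Q = (\<Sum>u\<in>W. \<Sum>x\<in>W. if H u x then (D u - 1) * g u else 0)
               - (\<Sum>u\<in>W. \<Sum>x\<in>W. if H u x then (D u - 1) * g x else 0)"
    unfolding Q_def sum_subtractf[symmetric]
    by (intro sum.cong refl) (auto simp: algebra_simps)
  have "(\<Sum>v\<in>W. ff (dg W v) + (\<Sum>u\<in>W. if H v u then ff (dg W u) else 0)
     - (\<Sum>u\<in>W. if H v u then (\<Sum>x\<in>W. if H u x \<and> x \<noteq> v then gg (dg W x) else 0) else 0))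
     = (\<Sum>v\<in>W. F v) + (\<Sum>v\<in>W. \<Sum>u\<in>W. if H v u then F u else 0)
       - (\<Sum>v\<in>W. \<Sum>u\<in>W. if H v u then (\<Sum>x\<in>W. if H u x \<and> x \<noteq> v then g x else 0) else 0)"
    unfolding F_def g_def by (simp add: sum_subtractf sum.distrib)
  also have "\<dots> = (\<Sum>v\<in>W. F v + D v * F v) - (\<Sum>u\<in>W. \<Sum>x\<in>W. if H u x then (D u - 1) * g x else 0)"
    unfolding A B by (simp add: sum.distrib)
  finally show ?thesis using C Qeq Qle by linarith
qed

lemma shearer: "S \<subseteq> V \<Longrightarrow> Phi S \<le> real (alpha S)"
proof (induction "card S" arbitrary: S rule: less_induct)
  case less
  have S: "S \<subseteq> V" by fact
  have finS: "finite S" using fin_sub[OF S] .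
  show ?case
  proof (cases "S = {}")
    case True thus ?thesis by (simp add: Phi_def)
  next
    case False
    define Sv where "Sv v = S - insert v {u\<in>S. H v u}" for v
    have "\<exists>v\<in>S. Phi S - Phi (Sv v) \<le> 1"
    proof (rule ccontr)
      assume "\<not> ?thesis"
      hence gt: "\<forall>v\<in>S. 1 < Phi S - Phi (Sv v)" by auto
      have "(\<Sum>v\<in>S. (1::real)) < (\<Sum>v\<in>S. Phi S - Phi (Sv v))"
        by (rule sum_strict_mono[OF finS False]) (use gt in auto)
      also have "\<dots> \<le> (\<Sum>v\<in>S. ff (dg S v) + (\<Sum>u\<in>S. if H v u then ff (dg S u) else 0)
         - (\<Sum>u\<in>S. if H v u then (\<Sum>x\<in>S. if H u x \<and> x \<noteq> v then gg (dg S x) else 0) else 0))"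
        by (rule sum_mono) (unfold Sv_def, rule loss[OF S], simp)
      also have "\<dots> \<le> real (card S)" by (rule total[OF S])
      finally show False by simp
    qed
    then obtain v where v: "v \<in> S" and le1: "Phi S - Phi (Sv v) \<le> 1" by blast
    have sub: "Sv v \<subset> S" using v by (auto simp: Sv_def)
    hence "card (Sv v) < card S" using finS psubset_card_mono by blast
    moreover have "Sv v \<subseteq> V" using sub S by auto
    ultimately have IH: "Phi (Sv v) \<le> real (alpha (Sv v))" using less by blast
    obtain I where I: "indep (Sv v) I" "card I = alpha (Sv v)" using alpha_ex \<open>Sv v \<subseteq> V\<close> by blast
    have "indep S (insert v I)" using I(1) v symH irrH unfolding indep_def Sv_def by auto
    moreover have "v \<notin> I" using I(1) unfolding indep_def Sv_def by auto
    moreover have "finite I" using I(1) finS unfolding indep_def Sv_def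
      by (meson Diff_subset finite_subset)
    ultimately have "alpha (Sv v) + 1 \<le> alpha S" using alpha_ge[OF S] I(2) by fastforce
    thus ?thesis using IH le1 by linarith
  qed
qed

lemma alpha_lin: assumes S: "S \<subseteq> V" shows "127 * card S \<le> 425 * alpha S"
proof -
  have "(\<Sum>x\<in>S. (127/425::real)) \<le> Phi S"
    unfolding Phi_def by (rule sum_mono) (use T4 dg_le4[OF S] in auto)
  hence "real (card S) * 127 / 425 \<le> real (alpha S)" using shearer[OF S] by simp
  hence "real (127 * card S) \<le> real (425 * alpha S)" by simp
  thus ?thesis by linarith
qed

end



context tfg begin

definition edge :: "'a set \<Rightarrow> 'a set \<Rightarrow> bool" where
  "edge S e \<longleftrightarrow> (\<exists>x y. e = {x,y} \<and> x \<in> S \<and> y \<in> S \<and> H x y)"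

definition matching :: "'a set \<Rightarrow> 'a set set \<Rightarrow> bool" where
  "matching S M \<longleftrightarrow> (\<forall>e\<in>M. edge S e) \<and> (\<forall>e\<in>M. \<forall>e'\<in>M. e \<noteq> e' \<longrightarrow> e \<inter> e' = {})"

definition mu :: "'a set \<Rightarrow> nat" where
  "mu S = Max (card ` {M. matching S M})"

definition maxm :: "'a set \<Rightarrow> 'a set set \<Rightarrow> bool" where
  "maxm S M \<longleftrightarrow> matching S M \<and> card M = mu S"

lemma edge_I: "x \<in> S \<Longrightarrow> y \<in> S \<Longrightarrow> H x y \<Longrightarrow> edge S {x,y}"
  unfolding edge_def by blast

lemma edge_sub: "edge S e \<Longrightarrow> e \<subseteq> S"
  unfolding edge_def by auto

lemma edge_mono: "edge S e \<Longrightarrow> S \<subseteq> T \<Longrightarrow> edge T e"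
  unfolding edge_def by auto

lemma edge_del: "edge S e \<Longrightarrow> v \<notin> e \<Longrightarrow> edge (S - {v}) e"
  unfolding edge_def by auto

lemma edge_ne: "edge S e \<Longrightarrow> e \<noteq> {}"
  unfolding edge_def by auto

lemma edge_card: "edge S e \<Longrightarrow> card e = 2"
proof -
  assume "edge S e"
  then obtain x y where xy: "e = {x,y}" "H x y" unfolding edge_def by auto
  have "x \<noteq> y" using xy(2) irrH by metis
  thus ?thesis using xy(1) by simp
qed

lemma edge_fin: "edge S e \<Longrightarrow> finite e"
  unfolding edge_def by auto

lemma edge_other: assumes "edge S e" "x \<in> e" shows "\<exists>y. e = {x,y} \<and> x \<in> S \<and> y \<in> S \<and> H x y"
proof -
  obtain a b where ab: "e = {a,b}" "a \<in> S" "b \<in> S" "H a b" using assms(1) unfolding edge_def by auto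
  show ?thesis
  proof (cases "x = a")
    case True thus ?thesis using ab by auto
  next
    case False
    hence "x = b" using ab assms(2) by auto
    moreover have "H b a" using ab(4) symH by metis
    ultimately show ?thesis using ab by (intro exI[of _ a]) auto
  qed
qed

lemma edge_H: assumes "edge S e" "x \<in> e" "y \<in> e" "x \<noteq> y" shows "H x y"
proof -
  obtain a b where ab: "e = {a,b}" "H a b" using assms(1) unfolding edge_def by auto
  have "H b a" using ab(2) symH by metis
  thus ?thesis using assms ab by auto
qed

lemma matching_Pow: assumes "matching S M" shows "M \<subseteq> Pow S"
  using assms edge_sub unfolding matching_def by auto

lemma match_fin_set: "S \<subseteq> V \<Longrightarrow> finite {M. matching S M}"
proof -
  assume "S \<subseteq> V"
  hence "finite (Pow (Pow S))" using fin_sub by auto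
  moreover have "{M. matching S M} \<subseteq> Pow (Pow S)" using matching_Pow by blast
  ultimately show ?thesis using finite_subset by blast
qed

lemma match_fin: assumes S: "S \<subseteq> V" and m: "matching S M" shows "finite M"
proof -
  have "finite (Pow S)" using fin_sub[OF S] by simp
  thus ?thesis using finite_subset[OF matching_Pow[OF m]] by blast
qed

lemma mu_ge: assumes "S \<subseteq> V" "matching S M" shows "card M \<le> mu S"
  unfolding mu_def using match_fin_set[OF assms(1)] assms(2) by (intro Max_ge) auto

lemma mu_ex: "S \<subseteq> V \<Longrightarrow> \<exists>M. maxm S M"
proof -
  assume S: "S \<subseteq> V"
  have "matching S {}" by (auto simp: matching_def)
  hence "mu S \<in> card ` {M. matching S M}" unfolding mu_def
    using match_fin_set[OF S] by (intro Max_in) auto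
  thus ?thesis by (auto simp: maxm_def)
qed

lemma cov_sub: "matching S M \<Longrightarrow> \<Union>M \<subseteq> S"
  using Union_mono[OF matching_Pow] by simp

lemma cov_card: assumes "S \<subseteq> V" "matching S M" shows "card (\<Union>M) = 2 * card M"
proof -
  have "pairwise disjnt M" using assms(2) unfolding matching_def pairwise_def disjnt_def by blast
  moreover have "\<And>e. e \<in> M \<Longrightarrow> finite e" using assms(2) edge_fin unfolding matching_def by blast
  ultimately have "card (\<Union>M) = sum card M" by (rule card_Union_disjoint)
  also have "\<dots> = sum (\<lambda>_. 2) M"
  proof (rule sum.cong[OF refl])
    fix e assume "e \<in> M"
    thus "card e = 2" using assms(2) edge_card unfolding matching_def by blast
  qed
  finally show ?thesis by simp
qed

lemma mu_le: assumes S: "S \<subseteq> V" shows "2 * mu S \<le> card S"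
proof -
  obtain M where M: "maxm S M" using mu_ex[OF S] by blast
  hence "card (\<Union>M) \<le> card S" using card_mono[OF fin_sub[OF S] cov_sub] by (auto simp: maxm_def)
  thus ?thesis using cov_card[OF S] M by (auto simp: maxm_def)
qed

lemma matching_mono: assumes "matching S M" "S \<subseteq> T" shows "matching T M"
proof -
  have "\<forall>e\<in>M. edge T e" using assms edge_mono unfolding matching_def by metis
  thus ?thesis using assms(1) unfolding matching_def by simp
qed

lemma mu_mono: assumes "S \<subseteq> T" "T \<subseteq> V" shows "mu S \<le> mu T"
proof -
  obtain M where M: "maxm S M" using mu_ex assms by (meson order_trans)
  hence "matching T M" using matching_mono assms(1) by (auto simp: maxm_def)
  thus ?thesis using mu_ge[OF assms(2)] M unfolding maxm_def by metis
qed

lemma mu_del: assumes S: "S \<subseteq> V" and v: "v \<in> S" shows "mu S \<le> mu (S - {v}) + 1"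
proof -
  obtain M where M: "maxm S M" using mu_ex[OF S] by blast
  define M' where "M' = {e\<in>M. v \<notin> e}"
  have m': "matching (S - {v}) M'"
  proof -
    have "\<forall>e\<in>M'. edge (S - {v}) e" using M edge_del unfolding M'_def maxm_def matching_def by simp
    thus ?thesis using M unfolding M'_def maxm_def matching_def by simp
  qed
  have "M - M' \<subseteq> {e\<in>M. v \<in> e}" by (auto simp: M'_def)
  have le1: "card {e\<in>M. v \<in> e} \<le> 1"
  proof -
    have "finite {e\<in>M. v \<in> e}" using match_fin[OF S] M by (auto simp: maxm_def)
    moreover have "\<forall>a\<in>{e\<in>M. v \<in> e}. \<forall>b\<in>{e\<in>M. v \<in> e}. a = b"
      using M unfolding maxm_def matching_def by blast
    ultimately show ?thesis using card_le_Suc0_iff_eq[of "{e\<in>M. v \<in> e}"] by simp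
  qed
  have finM: "finite M" using match_fin[OF S] M by (auto simp: maxm_def)
  have "card M \<le> card M' + card {e\<in>M. v \<in> e}"
  proof -
    have "M = M' \<union> {e\<in>M. v \<in> e}" by (auto simp: M'_def)
    hence "card M \<le> card M' + card {e\<in>M. v \<in> e}" by (metis card_Un_le)
    thus ?thesis .
  qed
  moreover have "card M' \<le> mu (S - {v})" using mu_ge[OF _ m'] S by auto
  ultimately show ?thesis using M le1 by (auto simp: maxm_def)
qed

lemma mu_union: assumes A: "A \<subseteq> V" and B: "B \<subseteq> V" and dis: "A \<inter> B = {}"
  shows "mu A + mu B \<le> mu (A \<union> B)"
proof -
  obtain MA where MA: "maxm A MA" using mu_ex[OF A] by blast
  obtain MB where MB: "maxm B MB" using mu_ex[OF B] by blast
  have cA: "\<Union>MA \<subseteq> A" "\<Union>MB \<subseteq> B" using MA MB cov_sub by (auto simp: maxm_def)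
  have ne: "\<And>e. e \<in> MA \<Longrightarrow> e \<noteq> {}" using MA edge_ne unfolding maxm_def matching_def by blast
  have mA: "matching A MA" and mB: "matching B MB" using MA MB by (auto simp: maxm_def)
  have "matching (A \<union> B) (MA \<union> MB)"
    unfolding matching_def
  proof (intro conjI ballI impI)
    fix e assume "e \<in> MA \<union> MB"
    thus "edge (A \<union> B) e" using mA mB edge_mono[of A e "A \<union> B"] edge_mono[of B e "A \<union> B"]
      unfolding matching_def by auto
  next
    fix e e' assume e: "e \<in> MA \<union> MB" "e' \<in> MA \<union> MB" "e \<noteq> e'"
    have sA: "\<And>f. f \<in> MA \<Longrightarrow> f \<subseteq> A" using cA by auto
    have sB: "\<And>f. f \<in> MB \<Longrightarrow> f \<subseteq> B" using cA by auto
    show "e \<inter> e' = {}"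
    proof (cases "e \<in> MA")
      case True
      show ?thesis
      proof (cases "e' \<in> MA")
        case True thus ?thesis using \<open>e \<in> MA\<close> e(3) mA unfolding matching_def by auto
      next
        case False hence "e' \<in> MB" using e by auto
        thus ?thesis using sA[OF \<open>e \<in> MA\<close>] sB dis by blast
      qed
    next
      case False hence eB: "e \<in> MB" using e by auto
      show ?thesis
      proof (cases "e' \<in> MB")
        case True thus ?thesis using eB e(3) mB unfolding matching_def by auto
      next
        case False hence "e' \<in> MA" using e by auto
        thus ?thesis using sB[OF eB] sA dis by blast
      qed
    qed
  qed
  hence "card (MA \<union> MB) \<le> mu (A \<union> B)" using mu_ge A B by blast
  moreover have "MA \<inter> MB = {}" using cA dis ne by blast
  moreover have "finite MA" "finite MB" using MA MB match_fin A B by (auto simp: maxm_def)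
  ultimately show ?thesis using MA MB by (simp add: card_Un_disjoint maxm_def)
qed

lemma alpha_mono: "S \<subseteq> T \<Longrightarrow> T \<subseteq> V \<Longrightarrow> alpha S \<le> alpha T"
  by (metis alpha_ex alpha_ge indep_def order_trans)

lemma alpha_union: assumes A: "A \<subseteq> V" and B: "B \<subseteq> V" and dis: "A \<inter> B = {}"
  and noe: "\<And>x y. x \<in> A \<Longrightarrow> y \<in> B \<Longrightarrow> \<not> H x y"
  shows "alpha A + alpha B \<le> alpha (A \<union> B)"
proof -
  obtain IA where IA: "indep A IA" "card IA = alpha A" using alpha_ex[OF A] by blast
  obtain IB where IB: "indep B IB" "card IB = alpha B" using alpha_ex[OF B] by blast
  have noe': "\<And>x y. x \<in> A \<Longrightarrow> y \<in> B \<Longrightarrow> \<not> H y x" using noe symH by metis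
  have "indep (A \<union> B) (IA \<union> IB)" using IA IB noe noe' unfolding indep_def by blast
  hence "card (IA \<union> IB) \<le> alpha (A \<union> B)" using alpha_ge A B by blast
  moreover have "finite IA" "finite IB" using IA IB fin_sub A B unfolding indep_def
    by (meson finite_subset)+
  moreover have "IA \<inter> IB = {}" using IA IB dis unfolding indep_def by blast
  ultimately show ?thesis using IA IB by (simp add: card_Un_disjoint)
qed

lemma alpha_3: assumes S: "S \<subseteq> V" and c: "3 \<le> card S" shows "2 \<le> alpha S"
proof -
  obtain T where T: "T \<subseteq> S" "card T = 3" using c by (meson obtain_subset_with_card_n)
  then obtain a b c where abc: "T = {a,b,c}" "a \<noteq> b" "a \<noteq> c" "b \<noteq> c"
    by (metis card_3_iff)
  have "\<not> (H a b \<and> H b c \<and> H a c)" using tri by blast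
  then obtain x y where xy: "x \<in> S" "y \<in> S" "x \<noteq> y" "\<not> H x y"
    using abc T(1) by auto
  have "\<not> H y x" using xy(4) symH by metis
  hence "indep S {x,y}" using xy irrH unfolding indep_def by auto
  thus ?thesis using alpha_ge[OF S] xy by fastforce
qed

end



lemma arith_fin: "(n::nat) \<le> 2*m+1 \<Longrightarrow> 2*m \<le> n \<Longrightarrow> 127*n \<le> 425*a \<Longrightarrow> (3 \<le> n \<Longrightarrow> 2 \<le> a) \<Longrightarrow> 4*(n-m) \<le> 7*a"
proof -
  assume h: "(n::nat) \<le> 2*m+1" "2*m \<le> n" "127*n \<le> 425*a" "(3 \<le> n \<Longrightarrow> 2 \<le> a)"
  show ?thesis
  proof (rule ccontr)
    assume c: "\<not> 4*(n-m) \<le> 7*a"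
    hence "7*a < 2*n+2" using h(1,2) by linarith
    hence n10: "n \<le> 10" using h(3) by linarith
    hence "a \<le> 3" using \<open>7*a < 2*n+2\<close> by linarith
    have nc: "n=0 \<or> n=1 \<or> n=2 \<or> n=3 \<or> n=4 \<or> n=5 \<or> n=6 \<or> n=7 \<or> n=8 \<or> n=9 \<or> n=10" using n10 by presburger
    have ac: "a=0 \<or> a=1 \<or> a=2 \<or> a=3" using \<open>a \<le> 3\<close> by auto
    from nc ac show False using h c by (elim disjE; simp; arith)
  qed
qed

context tfg begin

definition R :: "'a set \<Rightarrow> 'a \<Rightarrow> 'a \<Rightarrow> bool" where
  "R S x y \<longleftrightarrow> x \<in> S \<and> y \<in> S \<and> H x y"

lemma swap_step:
  assumes S: "S \<subseteq> V" and M: "maxm S M" and N: "maxm S N"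
    and w: "w \<in> \<Union>M" "w \<notin> \<Union>N" and u: "u \<in> \<Union>N" "u \<notin> \<Union>M"
    and v: "v \<in> \<Union>N" "v \<notin> \<Union>M" and uv: "u \<noteq> v"
  shows "\<exists>N'. maxm S N' \<and> w \<notin> \<Union>N' \<and> card (N \<inter> M) < card (N' \<inter> M)"
proof -
  have mM: "matching S M" and mN: "matching S N" using M N by (auto simp: maxm_def)
  have finM: "finite M" and finN: "finite N" using match_fin[OF S] mM mN by auto
  have fcM: "finite (\<Union>M)" using cov_sub[OF mM] fin_sub[OF S] finite_subset by blast
  have fcN: "finite (\<Union>N)" using cov_sub[OF mN] fin_sub[OF S] finite_subset by blast
  have eqc: "card (\<Union>M) = card (\<Union>N)" using cov_card[OF S mM] cov_card[OF S mN] M N by (auto simp: maxm_def)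
  have "card (\<Union>M - \<Union>N) = card (\<Union>N - \<Union>M)"
    using eqc fcM fcN by (simp add: card_Diff_subset_Int Int_commute)
  moreover have "2 \<le> card (\<Union>N - \<Union>M)"
  proof -
    have "{u,v} \<subseteq> \<Union>N - \<Union>M" using u v by auto
    hence "card {u,v} \<le> card (\<Union>N - \<Union>M)" using fcN by (intro card_mono) auto
    thus ?thesis using uv by simp
  qed
  ultimately have c2: "2 \<le> card (\<Union>M - \<Union>N)" by simp
  have "\<exists>x. x \<in> \<Union>M \<and> x \<notin> \<Union>N \<and> x \<noteq> w"
  proof (rule ccontr)
    assume "\<not> ?thesis"
    hence "\<Union>M - \<Union>N \<subseteq> {w}" by blast
    hence "card (\<Union>M - \<Union>N) \<le> card {w}" by (intro card_mono) auto
    thus False using c2 by simp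
  qed
  then obtain x where x: "x \<in> \<Union>M" "x \<notin> \<Union>N" "x \<noteq> w" by blast
  then obtain e where e: "e \<in> M" "x \<in> e" by blast
  have edgee: "edge S e" using mM e(1) unfolding matching_def by blast
  obtain y where ey: "e = {x,y}" "x \<in> S" "y \<in> S" "H x y" using edge_other[OF edgee e(2)] by blast
  have eN: "e \<notin> N" using x(2) e(2) by blast
  have yN: "y \<in> \<Union>N"
  proof (rule ccontr)
    assume yN: "y \<notin> \<Union>N"
    have "matching S (insert e N)"
      unfolding matching_def
    proof (intro conjI ballI impI)
      fix f assume "f \<in> insert e N"
      thus "edge S f" using edgee mN unfolding matching_def by auto
    next
      fix f f' assume f: "f \<in> insert e N" "f' \<in> insert e N" "f \<noteq> f'"
      have dis: "\<And>g. g \<in> N \<Longrightarrow> e \<inter> g = {}" using x(2) yN ey(1) by blast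
      show "f \<inter> f' = {}"
      proof (cases "f = e")
        case True thus ?thesis using f dis by auto
      next
        case False
        show ?thesis
        proof (cases "f' = e")
          case True thus ?thesis using f dis False by auto
        next
          case False' : False
          thus ?thesis using f False mN unfolding matching_def by auto
        qed
      qed
    qed
    hence "card (insert e N) \<le> mu S" using mu_ge[OF S] by blast
    hence "card N + 1 \<le> mu S" using eN finN by simp
    thus False using N by (simp add: maxm_def)
  qed
  then obtain e2 where e2: "e2 \<in> N" "y \<in> e2" by blast
  have edgee2: "edge S e2" using mN e2(1) unfolding matching_def by blast
  obtain z where e2z: "e2 = {y,z}" "z \<in> S" "H y z" using edge_other[OF edgee2 e2(2)] by blast
  define N' where "N' = insert e (N - {e2})"
  have mN': "matching S N'"
    unfolding matching_def
  proof (intro conjI ballI impI)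
    fix f assume "f \<in> N'"
    thus "edge S f" using edgee mN unfolding matching_def N'_def by auto
  next
    fix f f' assume f: "f \<in> N'" "f' \<in> N'" "f \<noteq> f'"
    have dis: "\<And>g. g \<in> N - {e2} \<Longrightarrow> e \<inter> g = {}"
    proof -
      fix g assume g: "g \<in> N - {e2}"
      have "x \<notin> g" using x(2) g by blast
      moreover have "y \<notin> g" using mN g e2 unfolding matching_def by blast
      ultimately show "e \<inter> g = {}" using ey(1) by blast
    qed
    show "f \<inter> f' = {}"
    proof (cases "f = e")
      case True thus ?thesis using f dis unfolding N'_def by auto
    next
      case False
      show ?thesis
      proof (cases "f' = e")
        case True thus ?thesis using f dis False unfolding N'_def by auto
      next
        case False' : False
        thus ?thesis using f False mN unfolding matching_def N'_def by auto
      qed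
    qed
  qed
  have cN': "card N' = card N"
  proof -
    have "card N' = card (N - {e2}) + 1" unfolding N'_def using eN finN by simp
    moreover have "card (N - {e2}) + 1 = card N" using e2(1) finN
      by (metis Suc_eq_plus1 card_Suc_Diff1)
    ultimately show ?thesis by simp
  qed
  have wN': "w \<notin> \<Union>N'"
  proof -
    have "w \<noteq> y" using yN w(2) by blast
    thus ?thesis using w(2) x(3) ey(1) unfolding N'_def by auto
  qed
  have e2M: "e2 \<notin> M"
  proof
    assume "e2 \<in> M"
    moreover have "y \<in> e2 \<inter> e" using e2(2) ey(1) by auto
    ultimately have "e2 = e" using mM e(1) unfolding matching_def by blast
    thus False using e2(1) eN by simp
  qed
  have "N' \<inter> M = insert e (N \<inter> M)" using e2M e(1) unfolding N'_def by auto
  hence "card (N' \<inter> M) = card (N \<inter> M) + 1" using eN finN by simp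
  moreover have "maxm S N'" using mN' cN' N by (simp add: maxm_def)
  ultimately show ?thesis using wN' by (intro exI[of _ N']) simp
qed

lemma gallai_aux:
  assumes S: "S \<subseteq> V" and miss: "\<forall>v\<in>S. \<exists>N. maxm S N \<and> v \<notin> \<Union>N"
  shows "\<forall>M u v. (R S ^^ n) u v \<longrightarrow> maxm S M \<longrightarrow> u \<in> S \<longrightarrow> u \<notin> \<Union>M \<longrightarrow> v \<in> S \<longrightarrow> v \<notin> \<Union>M \<longrightarrow> u = v"
proof (induction n rule: less_induct)
  case (less n)
  show ?case
  proof (intro allI impI, rule ccontr)
    fix M u v
    assume p: "(R S ^^ n) u v" and M: "maxm S M" and u: "u \<in> S" "u \<notin> \<Union>M"
      and v: "v \<in> S" "v \<notin> \<Union>M" and uv: "u \<noteq> v"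
    have mM: "matching S M" using M by (simp add: maxm_def)
    have finM: "finite M" using match_fin[OF S mM] .
    show False
    proof (cases "H u v")
      case True
      have "matching S (insert {u,v} M)"
        unfolding matching_def
      proof (intro conjI ballI impI)
        fix f assume "f \<in> insert {u,v} M"
        thus "edge S f" using edge_I[OF u(1) v(1) True] mM unfolding matching_def by auto
      next
        fix f f' assume f: "f \<in> insert {u,v} M" "f' \<in> insert {u,v} M" "f \<noteq> f'"
        have dis: "\<And>g. g \<in> M \<Longrightarrow> {u,v} \<inter> g = {}" using u(2) v(2) by blast
        show "f \<inter> f' = {}"
        proof (cases "f = {u,v}")
          case True thus ?thesis using f dis by auto
        next
          case False
          show ?thesis
          proof (cases "f' = {u,v}")
            case True thus ?thesis using f dis False by auto
          next
            case False' : False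
            thus ?thesis using f False mM unfolding matching_def by auto
          qed
        qed
      qed
      hence "card (insert {u,v} M) \<le> mu S" using mu_ge[OF S] by blast
      moreover have "{u,v} \<notin> M" using u(2) by blast
      ultimately have "card M + 1 \<le> mu S" using finM by simp
      thus False using M by (simp add: maxm_def)
    next
      case False
      obtain m where nm: "n = Suc m" using p uv by (cases n) auto
      then obtain w where uw: "R S u w" and wv: "(R S ^^ m) w v" using p relpowp_Suc_D2 by metis
      have w: "w \<in> S" "H u w" using uw by (auto simp: R_def)
      have wv': "w \<noteq> v" using False w by auto
      have m0: "m \<noteq> 0" using wv wv' by (cases m) auto
      have wu: "w \<noteq> u" using w irrH by auto
      have mn: "m < n" using nm by simp
      have IHm: "\<forall>M u v. (R S ^^ m) u v \<longrightarrow> maxm S M \<longrightarrow> u \<in> S \<longrightarrow> u \<notin> \<Union>M \<longrightarrow> v \<in> S \<longrightarrow> v \<notin> \<Union>M \<longrightarrow> u = v"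
        using less.IH[OF mn] .
      have one: "1 < n" using nm m0 by simp
      have IH1: "\<forall>M u v. (R S ^^ 1) u v \<longrightarrow> maxm S M \<longrightarrow> u \<in> S \<longrightarrow> u \<notin> \<Union>M \<longrightarrow> v \<in> S \<longrightarrow> v \<notin> \<Union>M \<longrightarrow> u = v"
        using less.IH[OF one] .
      have wM: "w \<in> \<Union>M"
      proof (rule ccontr)
        assume "w \<notin> \<Union>M"
        hence "w = v" using IHm wv M w(1) v by blast
        thus False using wv' by simp
      qed
      define C where "C = {N. maxm S N \<and> w \<notin> \<Union>N}"
      have Cne: "C \<noteq> {}" using miss w(1) by (auto simp: C_def)
      have Cfin: "finite C"
        by (rule finite_subset[OF _ match_fin_set[OF S]]) (auto simp: C_def maxm_def)
      define k where "k = Max ((\<lambda>N. card (N \<inter> M)) ` C)"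
      have "k \<in> (\<lambda>N. card (N \<inter> M)) ` C" unfolding k_def using Cne Cfin by (intro Max_in) auto
      then obtain N where NC: "N \<in> C" and Nk: "card (N \<inter> M) = k" by auto
      have kmax: "\<And>N'. N' \<in> C \<Longrightarrow> card (N' \<inter> M) \<le> k" unfolding k_def using Cfin by (auto intro: Max_ge)
      have N: "maxm S N" "w \<notin> \<Union>N" using NC by (auto simp: C_def)
      have uN: "u \<in> \<Union>N"
      proof (rule ccontr)
        assume uN: "u \<notin> \<Union>N"
        have "(R S ^^ 1) u w" using uw by (metis relpowp_1)
        hence "u = w" using IH1 N uN u(1) w(1) by blast
        thus False using wu by simp
      qed
      have vN: "v \<in> \<Union>N"
      proof (rule ccontr)
        assume vN: "v \<notin> \<Union>N"
        have "w = v" using IHm wv N vN v(1) w(1) by blast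
        thus False using wv' by simp
      qed
      obtain N' where N': "maxm S N'" "w \<notin> \<Union>N'" "card (N \<inter> M) < card (N' \<inter> M)"
        using swap_step[OF S M N(1) wM N(2) uN u(2) vN v(2) uv] by blast
      have "N' \<in> C" using N' by (simp add: C_def)
      thus False using kmax[of N'] Nk N'(3) by simp
    qed
  qed
qed

lemma def_le1:
  assumes S: "S \<subseteq> V" and conn: "\<forall>x\<in>S. \<forall>y\<in>S. (R S)\<^sup>*\<^sup>* x y"
    and miss: "\<forall>v\<in>S. \<exists>N. maxm S N \<and> v \<notin> \<Union>N"
  shows "card S \<le> 2 * mu S + 1"
proof -
  obtain M where M: "maxm S M" using mu_ex[OF S] by blast
  have mM: "matching S M" using M by (simp add: maxm_def)
  have "\<forall>a\<in>S - \<Union>M. \<forall>b\<in>S - \<Union>M. a = b"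
  proof (intro ballI)
    fix a b assume a: "a \<in> S - \<Union>M" and b: "b \<in> S - \<Union>M"
    obtain n where "(R S ^^ n) a b" using conn a b rtranclp_imp_relpowp by (metis DiffD1)
    thus "a = b" using gallai_aux[OF S miss, of n] M a b by blast
  qed
  hence c1: "card (S - \<Union>M) \<le> 1" using fin_sub[OF S] card_le_Suc0_iff_eq[of "S - \<Union>M"] by auto
  have fS: "finite S" using fin_sub[OF S] .
  have "card (S - \<Union>M) = card S - card (\<Union>M)"
    using cov_sub[OF mM] fS by (meson card_Diff_subset finite_subset)
  moreover have "card (\<Union>M) \<le> card S" using cov_sub[OF mM] fS by (simp add: card_mono)
  moreover have "card (\<Union>M) = 2 * mu S" using cov_card[OF S mM] M by (simp add: maxm_def)
  ultimately show ?thesis using c1 by linarith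
qed

lemma R_sym: "(R S)\<inverse>\<inverse> = R S"
proof (intro ext)
  fix x y
  have "H y x \<longleftrightarrow> H x y" using symH by metis
  thus "(R S)\<inverse>\<inverse> x y = R S x y" unfolding R_def by auto
qed

lemma main: "S \<subseteq> V \<Longrightarrow> 4 * (card S - mu S) \<le> 7 * alpha S"
proof (induction "card S" arbitrary: S rule: less_induct)
  case less
  have S: "S \<subseteq> V" by fact
  have finS: "finite S" using fin_sub[OF S] .
  have muS: "2 * mu S \<le> card S" by (rule mu_le[OF S])
  show ?case
  proof (cases "\<exists>v\<in>S. mu (S - {v}) < mu S")
    case True
    then obtain v where v: "v \<in> S" "mu (S - {v}) < mu S" by blast
    have d: "mu S \<le> mu (S - {v}) + 1" by (rule mu_del[OF S v(1)])
    have c: "card (S - {v}) = card S - 1" using v finS by simp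
    have lt: "card (S - {v}) < card S" using v finS by (meson card_Diff1_less)
    have S': "S - {v} \<subseteq> V" using S by auto
    have IH: "4 * (card (S - {v}) - mu (S - {v})) \<le> 7 * alpha (S - {v})" using less(1)[OF lt S'] .
    have "alpha (S - {v}) \<le> alpha S" by (rule alpha_mono[OF _ S]) auto
    moreover have "1 \<le> card S" using lt by simp
    ultimately show ?thesis using IH c d v(2) by linarith
  next
    case False
    have miss: "\<forall>v\<in>S. \<exists>N. maxm S N \<and> v \<notin> \<Union>N"
    proof
      fix v assume v: "v \<in> S"
      have S': "S - {v} \<subseteq> V" using S by auto
      obtain N where N: "maxm (S - {v}) N" using mu_ex[OF S'] by blast
      have "mu (S - {v}) \<le> mu S" by (rule mu_mono[OF _ S]) auto
      hence eq: "mu (S - {v}) = mu S" using False v by force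
      have mN: "matching S N" using N matching_mono[of "S - {v}" N S] by (auto simp: maxm_def)
      have "v \<notin> \<Union>N" using cov_sub[of "S - {v}" N] N by (auto simp: maxm_def)
      thus "\<exists>N. maxm S N \<and> v \<notin> \<Union>N" using mN N eq by (auto simp: maxm_def)
    qed
    show ?thesis
    proof (cases "S = {}")
      case True thus ?thesis by simp
    next
      case False
      then obtain r where r: "r \<in> S" by blast
      define A where "A = {y. (R S)\<^sup>*\<^sup>* r y}"
      have AS: "A \<subseteq> S"
      proof
        fix y assume "y \<in> A"
        hence "(R S)\<^sup>*\<^sup>* r y" by (simp add: A_def)
        thus "y \<in> S" by (induction rule: rtranclp_induct) (auto simp: r R_def)
      qed
      have rA: "r \<in> A" by (simp add: A_def)
      have closed: "\<And>x y. x \<in> A \<Longrightarrow> y \<in> S \<Longrightarrow> H x y \<Longrightarrow> y \<in> A"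
      proof -
        fix x y assume x: "x \<in> A" and y: "y \<in> S" and h: "H x y"
        have "R S x y" using x AS y h by (auto simp: R_def)
        thus "y \<in> A" using x by (auto simp: A_def intro: rtranclp.rtrancl_into_rtrancl)
      qed
      show ?thesis
      proof (cases "A = S")
        case True
        have conn: "\<forall>x\<in>S. \<forall>y\<in>S. (R S)\<^sup>*\<^sup>* x y"
        proof (intro ballI)
          fix x y assume x: "x \<in> S" and y: "y \<in> S"
          have rx: "(R S)\<^sup>*\<^sup>* r x" and ry: "(R S)\<^sup>*\<^sup>* r y" using x y True by (auto simp: A_def)
          have "((R S)\<inverse>\<inverse>)\<^sup>*\<^sup>* x r" using rx by (rule rtranclp_converseI)
          hence "(R S)\<^sup>*\<^sup>* x r" by (simp add: R_sym)
          thus "(R S)\<^sup>*\<^sup>* x y" using ry by (rule rtranclp_trans)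
        qed
        have d1: "card S \<le> 2 * mu S + 1" by (rule def_le1[OF S conn miss])
        have l: "127 * card S \<le> 425 * alpha S" by (rule alpha_lin[OF S])
        have a3: "3 \<le> card S \<Longrightarrow> 2 \<le> alpha S" by (rule alpha_3[OF S])
        show ?thesis using arith_fin[OF d1 muS l a3] .
      next
        case False
        define B where "B = S - A"
        have AB: "A \<union> B = S" "A \<inter> B = {}" using AS by (auto simp: B_def)
        have Bne: "B \<noteq> {}" using False AS by (auto simp: B_def)
        have finA: "finite A" "finite B" using finS AS by (auto simp: B_def intro: finite_subset)
        have cS: "card S = card A + card B" using AB finA by (metis card_Un_disjoint)
        have cA: "card A < card S" using cS Bne finA by (simp add: card_gt_0_iff)
        have "card A > 0" using rA finA(1) by (auto simp: card_gt_0_iff)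
        hence cB: "card B < card S" using cS by linarith
        have A': "A \<subseteq> V" "B \<subseteq> V" using AS S by (auto simp: B_def)
        have IHA: "4 * (card A - mu A) \<le> 7 * alpha A" using less(1)[OF cA A'(1)] .
        have IHB: "4 * (card B - mu B) \<le> 7 * alpha B" using less(1)[OF cB A'(2)] .
        have noe: "\<And>x y. x \<in> A \<Longrightarrow> y \<in> B \<Longrightarrow> \<not> H x y" using closed by (auto simp: B_def)
        have mu_u: "mu A + mu B \<le> mu S" using mu_union[OF A' AB(2)] AB(1) by simp
        have al_u: "alpha A + alpha B \<le> alpha S" using alpha_union[OF A' AB(2) noe] AB(1) by simp
        have "2 * mu A \<le> card A" "2 * mu B \<le> card B" using mu_le A' by auto
        thus ?thesis using IHA IHB mu_u al_u cS muS by linarith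
      qed
    qed
  qed
qed

lemma colouring:
  "\<exists>c. (\<forall>v\<in>V. c v < card V - mu V) \<and> (\<forall>x\<in>V. \<forall>y\<in>V. x \<noteq> y \<longrightarrow> c x = c y \<longrightarrow> H x y)"
proof -
  obtain M where M: "maxm V M" using mu_ex[of V] by blast
  have mM: "matching V M" using M by (simp add: maxm_def)
  have finM: "finite M" using match_fin[OF _ mM] by simp
  define U where "U = V - \<Union>M"
  define B where "B = M \<union> (\<lambda>x. {x}) ` U"
  have finU: "finite U" using finV by (simp add: U_def)
  have finB: "finite B" using finM finU by (simp add: B_def)
  have disj: "M \<inter> (\<lambda>x. {x}) ` U = {}"
  proof -
    have "\<And>e. e \<in> M \<Longrightarrow> card e = 2" using mM edge_card unfolding matching_def by blast
    thus ?thesis by force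
  qed
  have cU: "card ((\<lambda>x. {x}) ` U) = card U" by (rule card_image) (simp add: inj_on_def)
  have cov: "\<Union>M \<subseteq> V" using cov_sub[OF mM] .
  have cU2: "card U = card V - card (\<Union>M)" unfolding U_def using cov finV
    by (meson card_Diff_subset finite_subset)
  have cc: "card (\<Union>M) = 2 * card M" using cov_card[OF _ mM] by simp
  have cle: "card (\<Union>M) \<le> card V" using cov finV by (simp add: card_mono)
  have cB: "card B = card V - mu V"
  proof -
    have "card B = card M + card U" unfolding B_def using finM finU disj cU
      by (simp add: card_Un_disjoint)
    thus ?thesis using cU2 cc cle M by (simp add: maxm_def)
  qed
  obtain h where h: "bij_betw h B {0..<card B}" using ex_bij_betw_finite_nat[OF finB] by blast
  define b where "b x = (SOME e. e \<in> B \<and> x \<in> e)" for x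
  have bx: "b x \<in> B \<and> x \<in> b x" if x: "x \<in> V" for x
  proof -
    have "\<exists>e. e \<in> B \<and> x \<in> e"
    proof (cases "x \<in> \<Union>M")
      case True thus ?thesis unfolding B_def by blast
    next
      case False hence "{x} \<in> B" using x unfolding B_def U_def by blast
      thus ?thesis by blast
    qed
    thus ?thesis unfolding b_def by (rule someI_ex)
  qed
  define c where "c x = h (b x)" for x
  have "\<forall>v\<in>V. c v < card V - mu V"
  proof
    fix v assume "v \<in> V"
    hence "b v \<in> B" using bx by blast
    hence "h (b v) \<in> {0..<card B}" using h by (auto simp: bij_betw_def)
    thus "c v < card V - mu V" using cB by (simp add: c_def)
  qed
  moreover have "\<forall>x\<in>V. \<forall>y\<in>V. x \<noteq> y \<longrightarrow> c x = c y \<longrightarrow> H x y"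
  proof (intro ballI impI)
    fix x y assume x: "x \<in> V" and y: "y \<in> V" and xy: "x \<noteq> y" and cxy: "c x = c y"
    have "b x = b y" using cxy bx[OF x] bx[OF y] h unfolding c_def bij_betw_def inj_on_def by blast
    hence ye: "y \<in> b x" using bx[OF y] by simp
    have xe: "x \<in> b x" and eB: "b x \<in> B" using bx[OF x] by auto
    show "H x y"
    proof (cases "b x \<in> M")
      case True
      hence "edge V (b x)" using mM unfolding matching_def by blast
      thus ?thesis using edge_H xe ye xy by blast
    next
      case False
      then obtain z where "b x = {z}" using eB unfolding B_def by blast
      thus ?thesis using xe ye xy by simp
    qed
  qed
  ultimately show ?thesis by blast
qed

end

theorem corollary3:
  fixes V :: "'a set" and E :: "'a \<Rightarrow> 'a \<Rightarrow> bool"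
  assumes "simple_graph V E"
    and "\<not> has_induced_3K1 V E"
    and "\<not> has_induced_K1_K5 V E"
  shows "real (chromatic_number V E) \<le> 7 / 4 * real (clique_number V E)"
proof -
  define H where "H x y \<longleftrightarrow> x \<in> V \<and> y \<in> V \<and> x \<noteq> y \<and> \<not> E x y" for x y
  from assms(1) have finV: "finite V" and symE: "\<forall>x y. E x y \<longrightarrow> E y x"
    and irrE: "\<forall>x. \<not> E x x" by (auto simp: simple_graph_def)
  have no3: "\<not> (a \<in> V \<and> b \<in> V \<and> c \<in> V \<and> a \<noteq> b \<and> a \<noteq> c \<and> b \<noteq> c \<and> \<not> E a b \<and> \<not> E a c \<and> \<not> E b c)"
    for a b c using assms(2) unfolding has_induced_3K1_def by blast
  have tf: "tfg V H"
  proof (unfold_locales)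
    show "finite V" by (rule finV)
  next
    fix x y assume "H x y" thus "H y x" using symE unfolding H_def by blast
  next
    fix x show "\<not> H x x" by (simp add: H_def)
  next
    fix x y assume "H x y" thus "x \<in> V" by (simp add: H_def)
  next
    fix x y z assume "H x y" "H y z" "H x z"
    thus False using no3[of x y z] unfolding H_def by blast
  next
    fix x assume x: "x \<in> V"
    show "card {y\<in>V. H x y} \<le> 4"
    proof (rule ccontr)
      assume "\<not> ?thesis"
      hence "5 \<le> card {y\<in>V. H x y}" by simp
      then obtain K where K: "K \<subseteq> {y\<in>V. H x y}" "card K = 5" by (meson obtain_subset_with_card_n)
      have "is_clique V E K" unfolding is_clique_def
      proof (intro conjI ballI impI)
        show "K \<subseteq> V" using K by auto
      next
        fix a b assume a: "a \<in> K" and b: "b \<in> K" and ab: "a \<noteq> b"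
        show "E a b"
        proof (rule ccontr)
          assume "\<not> E a b"
          thus False using no3[of x a b] a b ab K(1) x unfolding H_def by blast
        qed
      qed
      moreover have "x \<notin> K" using K(1) by (auto simp: H_def)
      moreover have "\<forall>y\<in>K. \<not> E x y" using K(1) by (auto simp: H_def)
      ultimately have "has_induced_K1_K5 V E" using x K(2) unfolding has_induced_K1_K5_def by blast
      thus False using assms(3) by simp
    qed
  qed
  interpret tfg V H by (rule tf)
  have m: "4 * (card V - mu V) \<le> 7 * alpha V" using main by simp
  have "{I. indep V I} = {K. is_clique V E K}"
    unfolding indep_def is_clique_def H_def by blast
  hence al: "alpha V = clique_number V E" unfolding alpha_def clique_number_def by simp
  obtain c where c: "\<forall>v\<in>V. c v < card V - mu V" "\<forall>x\<in>V. \<forall>y\<in>V. x \<noteq> y \<longrightarrow> c x = c y \<longrightarrow> H x y"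
    using colouring by blast
  have "is_colouring V E (card V - mu V) c"
    unfolding is_colouring_def
  proof (intro conjI ballI impI)
    fix v assume "v \<in> V" thus "c v < card V - mu V" using c(1) by blast
  next
    fix x y assume x: "x \<in> V" and y: "y \<in> V" and e: "E x y"
    have "x \<noteq> y" using e irrE by blast
    thus "c x \<noteq> c y" using c(2) x y e unfolding H_def by blast
  qed
  hence "chromatic_number V E \<le> card V - mu V" unfolding chromatic_number_def
    by (intro Least_le exI)
  hence "real (chromatic_number V E) \<le> real (card V - mu V)" by simp
  also have "\<dots> \<le> 7 / 4 * real (alpha V)" using m by linarith
  finally show ?thesis using al by simp
qed


end
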